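(* Let $p\ge 4$ be an integer and let $(a_n)_{n\ge0}$ be the sequence defined by $a_0=0$, $a_1=1$, $a_2=p-1$ and $a_{n+3}=(p-1)a_{n+2}-(p-1)a_{n+1}+a_n$ for $n\ge 0$. Set $\beta_n=2(a_n+a_{n-1})-1$. Then for every $n\ge 1$, \[ \frac{(a_n+a_{n-1})^2}{p}-\frac{a_n+a_{n-1}}{p}=a_na_{n-1} \qquad\text{and}\qquad \beta_n^2=4p\,a_na_{n-1}+1. \] *)

theory Defs
  imports Complex_Main
begin

fun aseq :: "int \<Rightarrow> nat \<Rightarrow> int" where
  "aseq p 0 = 0"
| "aseq p (Suc 0) = 1"
| "aseq p (Suc (Suc 0)) = p - 1"
| "aseq p (Suc (Suc (Suc n))) =
     (p - 1) * aseq p (Suc (Suc n)) - (p - 1) * aseq p (Suc n) + aseq p n"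

definition beta :: "int \<Rightarrow> nat \<Rightarrow> int" where
  "beta p n = 2 * (aseq p n + aseq p (n - 1)) - 1"

end

theory Submission
  imports Defs
begin

lemma rec2: "aseq p (Suc (Suc n)) = (p-2) * aseq p (Suc n) + 1 - aseq p n"
proof (induction n)
  case 0 then show ?case by simp
next
  case (Suc n)
  then show ?case by (simp add: algebra_simps)
qed

lemma inv: "(aseq p (Suc n))^2 + (aseq p n)^2 - (p-2) * aseq p (Suc n) * aseq p n
   - aseq p (Suc n) - aseq p n = 0"
proof (induction n)
  case 0 then show ?case by simp
next
  case (Suc n)
  have "aseq p (Suc (Suc n)) = (p-2) * aseq p (Suc n) + 1 - aseq p n" by (rule rec2)
  moreover have "\<And>x y z::int. z = (p-2)*y+1-x \<Longrightarrow> y^2+x^2-(p-2)*y*x-y-x = 0 \<Longrightarrow>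
     z^2+y^2-(p-2)*z*y-z-y = 0"
  proof -
    fix x y z :: int
    assume h: "z = (p-2)*y+1-x" "y^2+x^2-(p-2)*y*x-y-x = 0"
    have "z^2+y^2-(p-2)*z*y-z-y = y^2+x^2-(p-2)*y*x-y-x"
      unfolding h(1) by (simp add: power2_eq_square algebra_simps)
    then show "z^2+y^2-(p-2)*z*y-z-y = 0" using h(2) by simp
  qed
  ultimately show ?case using Suc by blast
qed

lemma key:
  assumes "n \<ge> 1"
  shows "(aseq p n + aseq p (n - 1))^2 - (aseq p n + aseq p (n - 1)) = p * (aseq p n * aseq p (n - 1))"
proof -
  obtain m where m: "n = Suc m" using assms by (cases n) auto
  have "(aseq p (Suc m))^2 + (aseq p m)^2 - (p-2) * aseq p (Suc m) * aseq p m
   - aseq p (Suc m) - aseq p m = 0" by (rule inv)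
  then show ?thesis unfolding m by (simp add: power2_eq_square algebra_simps)
qed

theorem lemma3p13:
  fixes p :: int and n :: nat
  assumes "p \<ge> 4" and "n \<ge> 1"
  shows "(of_int (aseq p n + aseq p (n - 1)))\<^sup>2 / of_int p
           - of_int (aseq p n + aseq p (n - 1)) / of_int p
         = (of_int (aseq p n * aseq p (n - 1)) :: real)
       \<and> (beta p n)\<^sup>2 = 4 * p * aseq p n * aseq p (n - 1) + 1"
proof
  have k: "(aseq p n + aseq p (n - 1))^2 - (aseq p n + aseq p (n - 1)) = p * (aseq p n * aseq p (n - 1))"
    using key assms(2) .
  have kr: "(of_int (aseq p n + aseq p (n - 1)))\<^sup>2 - of_int (aseq p n + aseq p (n - 1))
      = (of_int p * of_int (aseq p n * aseq p (n - 1)) :: real)"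
    using arg_cong[OF k, of "of_int :: int \<Rightarrow> real"] by simp
  have p0: "(of_int p :: real) \<noteq> 0" using assms(1) by simp
  show "(of_int (aseq p n + aseq p (n - 1)))\<^sup>2 / of_int p
           - of_int (aseq p n + aseq p (n - 1)) / of_int p
         = (of_int (aseq p n * aseq p (n - 1)) :: real)"
    using kr p0 by (simp add: diff_divide_distrib[symmetric])
  show "(beta p n)\<^sup>2 = 4 * p * aseq p n * aseq p (n - 1) + 1"
    using k unfolding beta_def by (simp add: power2_eq_square algebra_simps)
qed

end
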